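(* Let $v_1,\dots,v_m$ be nonzero vectors spanning $\mathbb{R}^n$ ($m\ge n$), let $c=(c_i)_{i=1}^m$ with $c_i>0$ and $\sum_i c_i=n$, and let $D_c=\inf\{\det(\sum_i\lambda_iv_i\otimes v_i)/\prod_i\lambda_i^{c_i};\ \lambda_i>0\}$. For $I\subset\{1,\dots,m\}$ with $|I|=n$ let $d_I=\det((v_i)_{i\in I})^2$. Then the infimum $D_c$ is attained at some $m$-tuple of positive numbers if and only if there exist non-negative numbers $(t_I)_{|I|=n}$ and positive numbers $(\lambda_i)_{i=1}^m$ such that $$c=\sum_{|I|=n}t_I1_I\qquad\text{and}\qquad t_I=d_I\prod_{i\in I}\lambda_i\ \text{ for all } I.$$
   Context: $1_I\in\mathbb{R}^m$ is the indicator vector of $I$; $v\otimes v=vv^T$; $\det((v_i)_{i\in I})$ is the determinant of the $n\times n$ matrix with columns $v_i$, $i\in I$ (its square does not depend on the ordering). *)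

theory Defs
  imports "HOL-Analysis.Analysis"
begin

definition outer :: "real^'n \<Rightarrow> real^'n^'n" where
  "outer v = (\<chi> a b. v $ a * v $ b)"

definition BL_ratio :: "nat \<Rightarrow> (nat \<Rightarrow> real^'n) \<Rightarrow> (nat \<Rightarrow> real) \<Rightarrow> (nat \<Rightarrow> real) \<Rightarrow> real" where
  "BL_ratio m v c lam =
     det (\<Sum>i<m. lam i *\<^sub>R outer (v i)) / (\<Prod>i<m. lam i powr c i)"

definition D_const :: "nat \<Rightarrow> (nat \<Rightarrow> real^'n) \<Rightarrow> (nat \<Rightarrow> real) \<Rightarrow> real" where
  "D_const m v c = Inf {BL_ratio m v c lam | lam. \<forall>i<m. lam i > 0}"

text \<open>Square of the determinant of the n x n matrix with columns v_i, i \<in> I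
  (columns ordered by an arbitrary bijection from the index type onto I; the
  square does not depend on the ordering).\<close>
definition dI :: "(nat \<Rightarrow> real^'n) \<Rightarrow> nat set \<Rightarrow> real" where
  "dI v I = (let f = (SOME f :: 'n \<Rightarrow> nat. bij_betw f UNIV I)
             in (det (\<chi> a b. v (f b) $ a)) ^ 2)"

end

theory Submission
  imports Defs
begin

lemma dI_eq:
  fixes v :: "nat \<Rightarrow> real^'n"
  assumes f: "bij_betw f (UNIV::'n set) I"
  shows "dI v I = (det (\<chi> a. v (f a))) ^ 2"
proof -
  define g where "g = (SOME f :: 'n \<Rightarrow> nat. bij_betw f UNIV I)"
  have g: "bij_betw g (UNIV::'n set) I" unfolding g_def by (rule someI[of _ f]) (rule f)
  define W where "W = (\<chi> a. v (f a))"
  have "dI v I = (det (\<chi> a b. v (g b) $ a)) ^ 2" unfolding dI_def g_def Let_def by simp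
  also have "(\<chi> a b. v (g b) $ a) = transpose (\<chi> a. v (g a))" by (simp add: transpose_def vec_eq_iff)
  finally have 1: "dI v I = (det (\<chi> a. v (g a))) ^ 2" by simp
  define p where "p = inv_into UNIV f \<circ> g"
  have pp: "p permutes UNIV"
    unfolding p_def using f g
    by (intro bij_imp_permutes) (auto intro: bij_betw_trans bij_betw_inv_into)
  have fp: "g = f \<circ> p" using f g unfolding p_def
    by (auto simp: fun_eq_iff bij_betw_def) (metis f_inv_into_f rangeI)
  have "det (\<chi> a. v (g a)) = det (\<chi> a. W $ p a)" by (simp add: fp W_def)
  also have "\<dots> = of_int (sign p) * det W" by (rule det_permute_rows[OF pp])
  finally have "(det (\<chi> a. v (g a)))^2 = (of_int (sign p))^2 * (det W)^2" by (simp add: power_mult_distrib)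
  also have "(of_int (sign p) :: real)^2 = 1" by (simp add: sign_def)
  finally show ?thesis using 1 W_def by simp
qed

lemma CB_block:
  fixes v :: "nat \<Rightarrow> real^'n" and lam :: "nat \<Rightarrow> real"
  assumes I: "card I = CARD('n)"
  shows "(\<Sum>g\<in>{g::'n\<Rightarrow>nat. inj g \<and> range g = I}.
            (\<Prod>a\<in>UNIV. lam (g a) * v (g a) $ a) * det (\<chi> a. v (g a)))
         = dI v I * (\<Prod>i\<in>I. lam i)"
proof -
  have "finite I" using I card.infinite by fastforce
  then obtain f where f: "bij_betw f (UNIV::'n set) I"
    using I by (metis finite finite_same_card_bij)
  define W where "W = (\<chi> a. v (f a))"
  have finv: "\<And>g x. range g = I \<Longrightarrow> f (inv_into UNIV f (g x)) = g x"
    using f by (auto simp: bij_betw_def) (metis f_inv_into_f rangeI)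
  have "(\<Sum>g\<in>{g::'n\<Rightarrow>nat. inj g \<and> range g = I}.
            (\<Prod>a\<in>UNIV. lam (g a) * v (g a) $ a) * det (\<chi> a. v (g a)))
      = (\<Sum>p\<in>{p. p permutes (UNIV::'n set)}.
            (\<Prod>a\<in>UNIV. lam ((f \<circ> p) a) * v ((f \<circ> p) a) $ a) * det (\<chi> a. v ((f \<circ> p) a)))"
  proof (rule sum.reindex_bij_witness[where i="\<lambda>p. f \<circ> p" and j="\<lambda>g. inv_into UNIV f \<circ> g"])
    fix p assume "p \<in> {p. p permutes (UNIV::'n set)}"
    then have p: "p permutes (UNIV::'n set)" by simp
    show "inv_into UNIV f \<circ> (f \<circ> p) = p" using f
      by (auto simp: fun_eq_iff bij_betw_def)
    have "bij_betw (f \<circ> p) UNIV I" using f p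
      by (meson bij_betw_trans permutes_imp_bij)
    then show "f \<circ> p \<in> {g. inj g \<and> range g = I}" by (auto simp: bij_betw_def)
  next
    fix g assume "g \<in> {g::'n\<Rightarrow>nat. inj g \<and> range g = I}"
    then have g: "bij_betw g (UNIV::'n set) I" by (auto simp: bij_betw_def)
    show "f \<circ> (inv_into UNIV f \<circ> g) = g" using f g
      by (auto simp: fun_eq_iff bij_betw_def) (metis f_inv_into_f rangeI)
    show "inv_into UNIV f \<circ> g \<in> {p. p permutes UNIV}"
      using f g by (auto intro!: bij_imp_permutes intro: bij_betw_trans bij_betw_inv_into)
  qed (clarify, simp add: finv)
  also have "\<dots> = (\<Sum>p\<in>{p. p permutes (UNIV::'n set)}.
            (\<Prod>i\<in>I. lam i) * det W * (of_int (sign p) * (\<Prod>a\<in>UNIV. W $ p a $ a)))"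
  proof (rule sum.cong[OF refl])
    fix p assume "p \<in> {p. p permutes (UNIV::'n set)}"
    then have p: "p permutes (UNIV::'n set)" by simp
    have b: "bij_betw (f \<circ> p) UNIV I" using f p
      by (meson bij_betw_trans permutes_imp_bij)
    have 1: "(\<Prod>a\<in>UNIV. lam ((f \<circ> p) a)) = (\<Prod>i\<in>I. lam i)"
      using prod.reindex_bij_betw[OF b] by blast
    have 2: "det (\<chi> a. v ((f \<circ> p) a)) = of_int (sign p) * det W"
      unfolding W_def using det_permute_rows[OF p, of "\<chi> a. v (f a)"] by simp
    show "(\<Prod>a\<in>UNIV. lam ((f \<circ> p) a) * v ((f \<circ> p) a) $ a) * det (\<chi> a. v ((f \<circ> p) a)) =
          (\<Prod>i\<in>I. lam i) * det W * (of_int (sign p) * (\<Prod>a\<in>UNIV. W $ p a $ a))"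
      unfolding prod.distrib 1 2 by (simp add: W_def)
  qed
  also have "\<dots> = (\<Prod>i\<in>I. lam i) * det W * det (transpose W)"
    by (simp add: sum_distrib_left det_def transpose_def)
  also have "\<dots> = dI v I * (\<Prod>i\<in>I. lam i)"
    using dI_eq[OF f, of v] by (simp add: W_def power2_eq_square)
  finally show ?thesis .
qed

lemma det_linear_rows_sum_gen_lemma:
  fixes S :: "'b set"
  assumes fS: "finite S"
    and fT: "finite T"
  shows "det ((\<chi> i. if i \<in> T then sum (a i) S else c i):: 'a::comm_ring_1^'n^'n) =
    sum (\<lambda>f. det((\<chi> i. if i \<in> T then a i (f i) else c i)::'a^'n^'n))
      {f. (\<forall>i \<in> T. f i \<in> S) \<and> (\<forall>i. i \<notin> T \<longrightarrow> f i = undefined)}"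
  using fT
proof (induct T arbitrary: a c set: finite)
  case empty
  have th0: "\<And>x y. (\<chi> i. if i \<in> {} then x i else y i) = (\<chi> i. y i)"
    by vector
  have e: "{f. (\<forall>i \<in> {}. f i \<in> S) \<and> (\<forall>i. i \<notin> {} \<longrightarrow> f i = undefined)} = {\<lambda>_. undefined}"
    by auto
  then show ?case
    unfolding th0 e by simp
next
  case (insert z T a c)
  let ?F = "\<lambda>T. {f. (\<forall>i \<in> T. f i \<in> S) \<and> (\<forall>i. i \<notin> T \<longrightarrow> f i = undefined)}"
  let ?h = "\<lambda>(y,g) i. if i = z then y else g i"
  let ?k = "\<lambda>h. (h(z),(\<lambda>i. if i = z then undefined else h i))"
  have thif: "\<And>a b c d. (if a \<or> b then c else d) = (if a then c else if b then c else d)"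
    by simp
  have thif2: "\<And>a b c d e. (if a then b else if c then d else e) =
     (if c then (if a then b else d) else (if a then b else e))"
    by simp
  from \<open>z \<notin> T\<close> have nz: "\<And>i. i \<in> T \<Longrightarrow> i \<noteq> z"
    by auto
  have "det (\<chi> i. if i \<in> insert z T then sum (a i) S else c i) =
    det (\<chi> i. if i = z then sum (a i) S else if i \<in> T then sum (a i) S else c i)"
    unfolding insert_iff thif ..
  also have "\<dots> = (\<Sum>j\<in>S. det (\<chi> i. if i \<in> T then sum (a i) S else if i = z then a i j else c i))"
    unfolding det_linear_row_sum[OF fS]
    by (subst thif2) (simp add: nz cong: if_cong)
  finally have tha:
    "det (\<chi> i. if i \<in> insert z T then sum (a i) S else c i) =
     (\<Sum>(j, f)\<in>S \<times> ?F T. det (\<chi> i. if i \<in> T then a i (f i)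
                                else if i = z then a i j
                                else c i))"
    unfolding insert.hyps unfolding sum.cartesian_product by blast
  show ?case unfolding tha
    using \<open>z \<notin> T\<close>
    by (intro sum.reindex_bij_witness[where i="?k" and j="?h"])
       (auto intro!: cong[OF refl[of det]] simp: vec_eq_iff)
qed

lemma det_linear_rows_sum_gen:
  fixes S :: "'b set"
  assumes fS: "finite S"
  shows "det (\<chi> i. sum (a i) S) =
    sum (\<lambda>f. det (\<chi> i. a i (f i) :: 'a::comm_ring_1 ^ 'n^'n)) {f. \<forall>i. f i \<in> S}"
proof -
  have th0: "\<And>x y. ((\<chi> i. if i \<in> (UNIV:: 'n set) then x i else y i) :: 'a^'n^'n) = (\<chi> i. x i)"
    by vector
  from det_linear_rows_sum_gen_lemma[OF fS, of "UNIV :: 'n set" a, unfolded th0, OF finite]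
  show ?thesis by simp
qed

lemma CB:
  fixes v :: "nat \<Rightarrow> real^'n" and lam :: "nat \<Rightarrow> real"
  shows "det (\<Sum>i<m. lam i *\<^sub>R outer (v i)) =
         (\<Sum>I\<in>{I. I \<subseteq> {..<m} \<and> card I = CARD('n)}. dI v I * (\<Prod>i\<in>I. lam i))"
proof -
  let ?G = "{g::'n\<Rightarrow>nat. \<forall>a. g a \<in> {..<m}}"
  let ?T = "{I. I \<subseteq> {..<m} \<and> card I = CARD('n)}"
  let ?F = "\<lambda>g::'n\<Rightarrow>nat. (\<Prod>a\<in>UNIV. lam (g a) * v (g a) $ a) * det (\<chi> a. v (g a))"
  have finG: "finite ?G"
  proof -
    have "?G = PiE UNIV (\<lambda>_. {..<m})" by (auto simp: PiE_def extensional_def Pi_def)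
    then show ?thesis by (simp add: finite_PiE)
  qed
  have finT: "finite ?T" by (rule finite_subset[of _ "Pow {..<m}"]) auto
  have M: "(\<Sum>i<m. lam i *\<^sub>R outer (v i)) = (\<chi> a. \<Sum>i\<in>{..<m}. (lam i * v i $ a) *s v i)"
    by (simp add: vec_eq_iff outer_def sum_component mult.assoc)
  have "det (\<Sum>i<m. lam i *\<^sub>R outer (v i)) =
     (\<Sum>g\<in>?G. det (\<chi> a. (lam (g a) * v (g a) $ a) *s v (g a)))"
    unfolding M by (rule det_linear_rows_sum_gen) simp
  also have "\<dots> = sum ?F ?G"
    by (simp add: det_rows_mul)
  also have "\<dots> = sum ?F {g\<in>?G. inj g}"
  proof (rule sum.mono_neutral_right[OF finG])
    show "{g\<in>?G. inj g} \<subseteq> ?G" by blast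
    show "\<forall>g\<in>?G - {g\<in>?G. inj g}. ?F g = 0"
    proof
      fix g assume "g \<in> ?G - {g\<in>?G. inj g}"
      then obtain a b where ab: "a \<noteq> b" "g a = g b" by (auto simp: inj_def)
      have "det (\<chi> a. v (g a)) = 0"
        by (rule det_identical_rows[OF ab(1)]) (simp add: row_def ab(2) vec_eq_iff)
      then show "?F g = 0" by simp
    qed
  qed
  also have "\<dots> = (\<Sum>I\<in>?T. sum ?F {g. g \<in> {g\<in>?G. inj g} \<and> range g = I})"
    by (rule sum.group[symmetric]) (use finG finT in \<open>auto simp: card_image\<close>)
  also have "\<dots> = (\<Sum>I\<in>?T. dI v I * (\<Prod>i\<in>I. lam i))"
  proof (rule sum.cong[OF refl])
    fix I assume I: "I \<in> ?T"
    have "{g. g \<in> {g\<in>?G. inj g} \<and> range g = I} = {g. inj g \<and> range g = I}"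
      using I by auto
    then show "sum ?F {g. g \<in> {g\<in>?G. inj g} \<and> range g = I} = dI v I * (\<Prod>i\<in>I. lam i)"
      using CB_block[of I lam v] I by simp
  qed
  finally show ?thesis .
qed

lemma dI_nonneg: "dI v I \<ge> 0"
  unfolding dI_def Let_def by simp

lemma exists_pos_dI:
  fixes v :: "nat \<Rightarrow> real^'n"
  assumes spans: "span (v ` {..<m}) = UNIV"
  shows "\<exists>I. I \<subseteq> {..<m} \<and> card I = CARD('n) \<and> dI v I > 0"
proof -
  obtain B where B: "B \<subseteq> v ` {..<m}" "independent B" "v ` {..<m} \<subseteq> span B"
    by (rule maximal_independent_subset)
  have "card B = dim (v ` {..<m})" by (rule basis_card_eq_dim[OF B(1) B(3) B(2)])
  also have "\<dots> = dim (span (v ` {..<m}))" by simp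
  also have "\<dots> = CARD('n)" unfolding spans by simp
  finally have cB: "card B = CARD('n)" .
  obtain I where I: "I \<subseteq> {..<m}" "inj_on v I" "B = v ` I"
    using B(1) subset_image_inj by metis
  have cI: "card I = CARD('n)" using cB I by (simp add: card_image)
  have "finite I" using cI card.infinite by fastforce
  then obtain f where f: "bij_betw f (UNIV::'n set) I"
    using cI by (metis finite finite_same_card_bij)
  define W where "W = (\<chi> a. v (f a))"
  have "rows W = B" using f I(3) unfolding W_def rows_def row_def bij_betw_def by auto
  then have "span (rows W) = UNIV"
    using B(3) spans by (metis span_mono span_span top.extremum_uniqueI)
  then have "invertible W"
    using matrix_left_invertible_span_rows invertible_left_inverse by blast
  then have "det W \<noteq> 0" by (simp add: invertible_det_nz)
  then have "dI v I > 0" using dI_eq[OF f, of v] W_def by simp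
  then show ?thesis using I cI by blast
qed

definition PP :: "nat \<Rightarrow> (nat \<Rightarrow> real^'n) \<Rightarrow> (nat \<Rightarrow> real) \<Rightarrow> real" where
  "PP m v lam = (\<Sum>I\<in>{I. I \<subseteq> {..<m} \<and> card I = CARD('n)}. dI v I * (\<Prod>i\<in>I. lam i))"

lemma ratio_PP: "BL_ratio m v c lam = PP m v lam / (\<Prod>i<m. lam i powr c i)"
  by (simp add: BL_ratio_def PP_def CB)

lemma finT: "finite {I. I \<subseteq> {..<(m::nat)} \<and> card I = k}"
  by (rule finite_subset[of _ "Pow {..<m}"]) auto

lemma sum_ind: "I \<subseteq> {..<(m::nat)} \<Longrightarrow> (\<Sum>i<m. (indicator I i :: real)) = real (card I)"
proof -
  assume "I \<subseteq> {..<m}"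
  then have "{..<m} \<inter> I = I" by auto
  then show ?thesis using sum.inter_restrict[of "{..<m}" "\<lambda>_. 1::real" I]
    by (simp add: indicator_def of_bool_def)
qed

lemma swap_ind:
  fixes t :: "nat set \<Rightarrow> real"
  assumes c: "\<forall>i<m. c i = (\<Sum>I\<in>{I. I \<subseteq> {..<m} \<and> card I = k}. t I * indicator I i)"
  shows "(\<Sum>i<m. c i * r i) = (\<Sum>I\<in>{I. I \<subseteq> {..<m} \<and> card I = k}. t I * (\<Sum>i\<in>I. r i))"
proof -
  let ?T = "{I. I \<subseteq> {..<m} \<and> card I = k}"
  have "(\<Sum>i<m. c i * r i) = (\<Sum>i<m. \<Sum>I\<in>?T. t I * indicator I i * r i)"
  proof (rule sum.cong[OF refl])
    fix x assume "x \<in> {..<m}"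
    then have "c x = (\<Sum>I\<in>?T. t I * indicator I x)" using c by simp
    then show "c x * r x = (\<Sum>I\<in>?T. t I * indicator I x * r x)"
      by (simp only: sum_distrib_right)
  qed
  also have "\<dots> = (\<Sum>I\<in>?T. \<Sum>i<m. t I * (indicator I i * r i))"
    by (subst sum.swap) (simp add: mult.assoc)
  also have "\<dots> = (\<Sum>I\<in>?T. t I * (\<Sum>i\<in>I. r i))"
  proof (rule sum.cong[OF refl])
    fix I assume "I \<in> ?T"
    then have "{..<m} \<inter> I = I" by auto
    then show "(\<Sum>i<m. t I * (indicator I i * r i)) = t I * (\<Sum>i\<in>I. r i)"
      using sum.inter_restrict[of "{..<m}" r I]
      by (simp add: sum_distrib_left[symmetric] indicator_def if_distrib cong: if_cong)
  qed
  finally show ?thesis .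
qed

lemma suff:
  fixes v :: "nat \<Rightarrow> real^'n" and c :: "nat \<Rightarrow> real" and m :: nat
    and t :: "nat set \<Rightarrow> real"
  assumes csum: "(\<Sum>i<m. c i) = real CARD('n)"
    and lpos: "\<forall>i<m. lam i > 0"
    and tnn: "\<forall>I. I \<subseteq> {..<m} \<and> card I = CARD('n) \<longrightarrow> t I \<ge> 0"
    and cdec: "\<forall>i<m. c i = (\<Sum>I\<in>{I. I \<subseteq> {..<m} \<and> card I = CARD('n)}. t I * indicator I i)"
    and teq: "\<forall>I. I \<subseteq> {..<m} \<and> card I = CARD('n) \<longrightarrow> t I = dI v I * (\<Prod>i\<in>I. lam i)"
  shows "BL_ratio m v c lam = D_const m v c"
proof -
  let ?T = "{I. I \<subseteq> {..<m} \<and> card I = CARD('n)}"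
  let ?D = "\<lambda>mu. (\<Prod>i<m. mu i powr c i)"
  have "real CARD('n) = (\<Sum>i<m. c i * 1)" using csum by simp
  also have "\<dots> = (\<Sum>I\<in>?T. t I * (\<Sum>i\<in>I. 1))" by (rule swap_ind[OF cdec])
  also have "\<dots> = (\<Sum>I\<in>?T. t I) * real CARD('n)" by (simp add: sum_distrib_right)
  finally have st: "(\<Sum>I\<in>?T. t I) = 1" by simp
  have Pl: "PP m v lam = 1" unfolding PP_def using st teq by simp
  have Dl: "?D lam > 0" using lpos by (intro prod_pos) force
  have lnD: "ln (?D mu) = (\<Sum>i<m. c i * ln (mu i))" if "\<forall>i<m. mu i > 0" for mu
    using that by (subst ln_prod) auto
  have key: "?D mu / ?D lam \<le> PP m v mu" if mpos: "\<forall>i<m. mu i > 0" for mu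
  proof -
    let ?Tp = "{I\<in>?T. t I > 0}"
    have finTp: "finite ?Tp" using finT by simp
    have stp: "(\<Sum>I\<in>?Tp. t I) = 1"
      using st by (subst sum.mono_neutral_left[OF finT, of ?Tp]) (use tnn in \<open>auto simp: less_le\<close>)
    then have ne: "?Tp \<noteq> {}" by (metis sum.empty zero_neq_one)
    define x where "x I = (\<Prod>i\<in>I. mu i) / (\<Prod>i\<in>I. lam i)" for I
    have prl: "(\<Prod>i\<in>I. lam i) > 0" if "I \<in> ?T" for I using that lpos by (intro prod_pos) auto
    have prm: "(\<Prod>i\<in>I. mu i) > 0" if "I \<in> ?T" for I using that mpos by (intro prod_pos) auto
    have xpos: "x I > 0" if "I \<in> ?T" for I using prl prm that x_def by simp
    have tx: "t I * x I = dI v I * (\<Prod>i\<in>I. mu i)" if "I \<in> ?T" for I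
      using teq that prl[OF that] by (simp add: x_def)
    have L1: "(\<Sum>I\<in>?Tp. t I * ln (x I)) \<le> ln (\<Sum>I\<in>?Tp. t I *\<^sub>R x I)"
      by (rule concave_on_sum[OF finTp ne ln_concave stp]) (use xpos in auto)
    have S1: "(\<Sum>I\<in>?Tp. t I *\<^sub>R x I) = (\<Sum>I\<in>?Tp. dI v I * (\<Prod>i\<in>I. mu i))"
      using tx by simp
    have S2: "(\<Sum>I\<in>?Tp. dI v I * (\<Prod>i\<in>I. mu i)) \<le> PP m v mu" unfolding PP_def
      by (rule sum_mono2[OF finT]) (auto intro!: mult_nonneg_nonneg dI_nonneg prod_nonneg less_imp_le[OF mpos[rule_format]])
    have S3: "(\<Sum>I\<in>?Tp. t I *\<^sub>R x I) > 0"
      using ne finTp xpos by (intro sum_pos) auto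
    have Ppos: "PP m v mu > 0" using S1 S2 S3 by linarith
    have L2: "(\<Sum>I\<in>?Tp. t I * ln (x I)) \<le> ln (PP m v mu)"
      using L1 S1 S2 S3 Ppos by (smt (verit) ln_le_cancel_iff)
    have "(\<Sum>I\<in>?Tp. t I * ln (x I)) = (\<Sum>I\<in>?T. t I * ln (x I))"
      by (rule sum.mono_neutral_left[OF finT]) (use tnn in \<open>auto simp: less_le\<close>)
    also have "\<dots> = (\<Sum>I\<in>?T. t I * (\<Sum>i\<in>I. ln (mu i) - ln (lam i)))"
    proof (rule sum.cong[OF refl])
      fix I assume I: "I \<in> ?T"
      then have fI: "finite I" using finite_subset by auto
      have "ln (x I) = (\<Sum>i\<in>I. ln (mu i) - ln (lam i))"
        unfolding x_def using prm[OF I] prl[OF I] I mpos lpos fI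
        by (subst ln_divide_pos) (auto simp: ln_prod sum_subtractf intro!: arg_cong2[where f="(-)"] ln_prod)
      then show "t I * ln (x I) = t I * (\<Sum>i\<in>I. ln (mu i) - ln (lam i))" by simp
    qed
    also have "\<dots> = (\<Sum>i<m. c i * (ln (mu i) - ln (lam i)))"
      by (rule swap_ind[OF cdec, symmetric])
    also have "\<dots> = ln (?D mu) - ln (?D lam)"
      using lnD[OF mpos] lnD[OF lpos] by (simp add: sum_subtractf right_diff_distrib)
    also have "\<dots> = ln (?D mu / ?D lam)"
      using Dl mpos by (subst ln_divide_pos) (auto intro!: prod_pos)
    finally have "ln (?D mu / ?D lam) \<le> ln (PP m v mu)" using L2 by simp
    then show ?thesis using Ppos Dl mpos
      by (subst (asm) ln_le_cancel_iff) (auto intro!: divide_pos_pos prod_pos)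
  qed
  have le: "BL_ratio m v c lam \<le> BL_ratio m v c mu" if mpos: "\<forall>i<m. mu i > 0" for mu
  proof -
    have Dm: "?D mu > 0" using mpos by (intro prod_pos) force
    have "BL_ratio m v c lam = 1 / ?D lam" by (simp add: ratio_PP Pl)
    also have "\<dots> \<le> PP m v mu / ?D mu"
      using key[OF mpos] Dm Dl by (simp add: field_simps)
    also have "\<dots> = BL_ratio m v c mu" by (simp add: ratio_PP)
    finally show ?thesis .
  qed
  show ?thesis unfolding D_const_def
    by (rule cInf_eq_minimum[symmetric]) (use lpos le in auto)
qed

lemma foc:
  fixes v :: "nat \<Rightarrow> real^'n" and c :: "nat \<Rightarrow> real"
  assumes lpos: "\<forall>i<m. lam i > 0"
    and minl: "\<forall>mu. (\<forall>i<m. mu i > 0) \<longrightarrow> BL_ratio m v c lam \<le> BL_ratio m v c mu"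
    and i: "i < m"
  shows "c i * PP m v lam =
    (\<Sum>I\<in>{I. I \<subseteq> {..<m} \<and> card I = CARD('n)}. dI v I * (\<Prod>j\<in>I. lam j) * indicator I i)"
proof -
  let ?T = "{I. I \<subseteq> {..<m} \<and> card I = CARD('n)}"
  define A where "A = (\<Sum>I\<in>?T. if i \<in> I then 0 else dI v I * (\<Prod>j\<in>I. lam j))"
  define B where "B = (\<Sum>I\<in>?T. if i \<in> I then dI v I * (\<Prod>j\<in>I-{i}. lam j) else 0)"
  have prI: "(\<Prod>j\<in>I. (lam(i:=s)) j) = (if i \<in> I then s * (\<Prod>j\<in>I-{i}. lam j) else (\<Prod>j\<in>I. lam j))"
    if "I \<in> ?T" for I s
  proof -
    have fI: "finite I" using that finite_subset by auto
    show ?thesis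
    proof (cases "i \<in> I")
      case True
      then show ?thesis using prod.remove[OF fI True, of "lam(i:=s)"]
        by (simp add: prod.cong[of "I - {i}" "I - {i}" "lam(i:=s)" lam])
    next
      case False
      then show ?thesis by (auto intro!: prod.cong)
    qed
  qed
  have PPs: "PP m v (lam(i:=s)) = A + s * B" for s
    unfolding PP_def A_def B_def sum_distrib_left sum.distrib[symmetric]
  proof (rule sum.cong[OF refl])
    fix I assume I: "I \<in> ?T"
    show "dI v I * (\<Prod>j\<in>I. (lam(i:=s)) j) = (if i \<in> I then 0 else dI v I * (\<Prod>j\<in>I. lam j)) +
         s * (if i \<in> I then dI v I * (\<Prod>j\<in>I-{i}. lam j) else 0)"
      by (cases "i \<in> I") (simp_all add: prI[OF I] del: fun_upd_apply)
  qed
  define K where "K = (\<Prod>j\<in>{..<m}-{i}. lam j powr c j)"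
  have Ds: "(\<Prod>j<m. (lam(i:=s)) j powr c j) = s powr c i * K" for s
    unfolding K_def using prod.remove[of "{..<m}" i "\<lambda>j. (lam(i:=s)) j powr c j"] i
    by (simp add: prod.cong[of "{..<m} - {i}" "{..<m} - {i}" "\<lambda>j. (lam(i:=s)) j powr c j" "\<lambda>j. lam j powr c j"])
  have Kpos: "K > 0" unfolding K_def using lpos by (intro prod_pos) force
  define g where "g = (\<lambda>s. (A + s * B) * s powr (- c i))"
  have rat: "BL_ratio m v c (lam(i:=s)) = g s / K" if "s > 0" for s
    unfolding ratio_PP PPs Ds g_def using that Kpos by (simp add: powr_minus field_simps)
  have ll: "lam(i := lam i) = lam" by simp
  let ?x = "lam i"
  have xpos: "?x > 0" using lpos i by simp
  have gmin: "\<forall>y. \<bar>?x - y\<bar> < ?x \<longrightarrow> g ?x \<le> g y"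
  proof (intro allI impI)
    fix y assume "\<bar>?x - y\<bar> < ?x"
    then have ypos: "y > 0" by linarith
    have "\<forall>j<m. (lam(i:=y)) j > 0" using lpos ypos by simp
    then have "BL_ratio m v c lam \<le> BL_ratio m v c (lam(i:=y))" using minl by blast
    then have "g ?x / K \<le> g y / K" using rat[OF ypos] rat[OF xpos] ll by simp
    then show "g ?x \<le> g y" using Kpos by (simp add: divide_right_mono_neg le_divide_eq)
  qed
  have "(g has_real_derivative (B * ?x powr (- c i) + (A + ?x * B) * (- c i * ?x powr (- c i - 1)))) (at ?x)"
    unfolding g_def using xpos by (auto intro!: derivative_eq_intros)
  from DERIV_local_min[OF this xpos gmin]
  have d0: "B * ?x powr (- c i) + (A + ?x * B) * (- c i * ?x powr (- c i - 1)) = 0" .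
  have e1: "?x powr (- c i) * ?x powr (c i + 1) = ?x" using xpos by (simp add: powr_add[symmetric])
  have e2: "?x powr (- c i - 1) * ?x powr (c i + 1) = 1" using xpos by (simp add: powr_add[symmetric])
  have "(B * ?x powr (- c i) + (A + ?x * B) * (- c i * ?x powr (- c i - 1))) * ?x powr (c i + 1) = 0"
    using d0 by simp
  then have "B * (?x powr (- c i) * ?x powr (c i + 1)) - c i * (A + ?x * B) * (?x powr (- c i - 1) * ?x powr (c i + 1)) = 0"
    by (simp add: algebra_simps)
  then have key: "?x * B = c i * (A + ?x * B)" unfolding e1 e2 by (simp add: mult.commute)
  have "PP m v lam = A + ?x * B" using PPs[of ?x] ll by simp
  moreover have "(\<Sum>I\<in>?T. dI v I * (\<Prod>j\<in>I. lam j) * indicator I i) = ?x * B"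
    unfolding B_def sum_distrib_left
  proof (rule sum.cong[OF refl])
    fix I assume I: "I \<in> ?T"
    show "dI v I * (\<Prod>j\<in>I. lam j) * indicator I i =
      lam i * (if i \<in> I then dI v I * (\<Prod>j\<in>I-{i}. lam j) else 0)"
      using prI[OF I, of ?x] ll by (simp add: indicator_def split: if_splits)
  qed
  ultimately show ?thesis using key by simp
qed

theorem proposition4:
  fixes v :: "nat \<Rightarrow> real^'n" and c :: "nat \<Rightarrow> real" and m :: nat
  assumes nz: "\<forall>i<m. v i \<noteq> 0"
    and spans: "span (v ` {..<m}) = UNIV"
    and mn: "m \<ge> CARD('n)"
    and cpos: "\<forall>i<m. c i > 0"
    and csum: "(\<Sum>i<m. c i) = real CARD('n)"
  shows "(\<exists>lam. (\<forall>i<m. lam i > 0) \<and> BL_ratio m v c lam = D_const m v c)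
     \<longleftrightarrow>
     (\<exists>(t :: nat set \<Rightarrow> real) lam.
        (\<forall>i<m. lam i > 0) \<and>
        (\<forall>I. I \<subseteq> {..<m} \<and> card I = CARD('n) \<longrightarrow> t I \<ge> 0) \<and>
        (\<forall>i<m. c i = (\<Sum>I\<in>{I. I \<subseteq> {..<m} \<and> card I = CARD('n)}. t I * indicator I i)) \<and>
        (\<forall>I. I \<subseteq> {..<m} \<and> card I = CARD('n) \<longrightarrow> t I = dI v I * (\<Prod>i\<in>I. lam i)))"
proof
  assume "\<exists>t lam.
        (\<forall>i<m. lam i > 0) \<and>
        (\<forall>I. I \<subseteq> {..<m} \<and> card I = CARD('n) \<longrightarrow> t I \<ge> 0) \<and>
        (\<forall>i<m. c i = (\<Sum>I\<in>{I. I \<subseteq> {..<m} \<and> card I = CARD('n)}. t I * indicator I i)) \<and>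
        (\<forall>I. I \<subseteq> {..<m} \<and> card I = CARD('n) \<longrightarrow> t I = dI v I * (\<Prod>i\<in>I. lam i))"
  then obtain t lam where "(\<forall>i<m. lam i > 0)"
        "(\<forall>I. I \<subseteq> {..<m} \<and> card I = CARD('n) \<longrightarrow> t I \<ge> 0)"
        "(\<forall>i<m. c i = (\<Sum>I\<in>{I. I \<subseteq> {..<m} \<and> card I = CARD('n)}. t I * indicator I i))"
        "(\<forall>I. I \<subseteq> {..<m} \<and> card I = CARD('n) \<longrightarrow> t I = dI v I * (\<Prod>i\<in>I. lam i))"
    by blast
  with suff[OF csum, of lam t v] show "\<exists>lam. (\<forall>i<m. lam i > 0) \<and> BL_ratio m v c lam = D_const m v c"
    by blast
next
  assume "\<exists>lam. (\<forall>i<m. lam i > 0) \<and> BL_ratio m v c lam = D_const m v c"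
  then obtain lam where lpos: "\<forall>i<m. lam i > 0" and eq: "BL_ratio m v c lam = D_const m v c"
    by blast
  let ?T = "{I. I \<subseteq> {..<m} \<and> card I = CARD('n)}"
  let ?S = "{BL_ratio m v c lam | lam. \<forall>i<m. lam i > 0}"
  have PPnn: "PP m v mu \<ge> 0" if "\<forall>i<m. mu i > 0" for mu
    unfolding PP_def using that
    by (intro sum_nonneg mult_nonneg_nonneg dI_nonneg prod_nonneg) (auto simp: less_imp_le)
  have Dpos: "(\<Prod>i<m. mu i powr c i) > 0" if "\<forall>i<m. mu i > 0" for mu
    using that by (intro prod_pos) force
  have "bdd_below ?S"
    by (rule bdd_belowI[of _ 0]) (use PPnn Dpos in \<open>auto simp: ratio_PP intro!: divide_nonneg_pos\<close>)
  then have minl: "\<forall>mu. (\<forall>i<m. mu i > 0) \<longrightarrow> BL_ratio m v c lam \<le> BL_ratio m v c mu"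
    unfolding eq D_const_def by (auto intro: cInf_lower)
  obtain I0 where I0: "I0 \<in> ?T" "dI v I0 > 0" using exists_pos_dI[OF spans] by blast
  define p where "p = PP m v lam"
  have ppos: "p > 0" unfolding p_def PP_def
  proof (rule sum_pos2[OF finT I0(1)])
    show "0 < dI v I0 * prod lam I0" using I0 lpos by (intro mult_pos_pos prod_pos) auto
    show "0 \<le> dI v I * prod lam I" if "I \<in> ?T" for I using lpos that
      by (intro mult_nonneg_nonneg dI_nonneg prod_nonneg) (auto simp: less_imp_le)
  qed
  have fo: "c i * p = (\<Sum>I\<in>?T. dI v I * (\<Prod>j\<in>I. lam j) * indicator I i)" if "i < m" for i
    unfolding p_def by (rule foc[OF lpos minl that])
  define s where "s = p powr (- 1 / real CARD('n))"
  have spos: "s > 0" unfolding s_def using ppos by simp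
  have sn: "s ^ CARD('n) = 1 / p"
  proof -
    have "s ^ CARD('n) = s powr real CARD('n)" using spos by (simp add: powr_realpow)
    also have "\<dots> = p powr (- 1)" unfolding s_def by (simp add: powr_powr)
    also have "\<dots> = 1 / p" using ppos by (simp add: powr_minus_divide)
    finally show ?thesis .
  qed
  define lam' where "lam' j = s * lam j" for j
  define t where "t I = dI v I * (\<Prod>j\<in>I. lam' j)" for I
  have tI: "t I = dI v I * (\<Prod>j\<in>I. lam j) / p" if "I \<in> ?T" for I
    using that sn unfolding t_def lam'_def by (simp add: prod.distrib)
  show "\<exists>t lam.
        (\<forall>i<m. lam i > 0) \<and>
        (\<forall>I. I \<subseteq> {..<m} \<and> card I = CARD('n) \<longrightarrow> t I \<ge> 0) \<and>
        (\<forall>i<m. c i = (\<Sum>I\<in>?T. t I * indicator I i)) \<and>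
        (\<forall>I. I \<subseteq> {..<m} \<and> card I = CARD('n) \<longrightarrow> t I = dI v I * (\<Prod>i\<in>I. lam i))"
  proof (intro exI[of _ t] exI[of _ lam'] conjI allI impI)
    show "i < m \<Longrightarrow> lam' i > 0" for i using lpos spos by (simp add: lam'_def)
    show "I \<subseteq> {..<m} \<and> card I = CARD('n) \<Longrightarrow> t I \<ge> 0" for I
      using tI[of I] lpos ppos
      by (auto intro!: divide_nonneg_pos mult_nonneg_nonneg dI_nonneg prod_nonneg simp: less_imp_le)
    show "t I = dI v I * (\<Prod>i\<in>I. lam' i)" for I by (simp add: t_def)
    fix i assume i: "i < m"
    have "(\<Sum>I\<in>?T. t I * indicator I i) = (\<Sum>I\<in>?T. dI v I * (\<Prod>j\<in>I. lam j) * indicator I i) / p"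
      unfolding sum_divide_distrib by (rule sum.cong[OF refl]) (simp add: tI)
    also have "\<dots> = c i" unfolding fo[OF i, symmetric] using ppos by simp
    finally show "c i = (\<Sum>I\<in>?T. t I * indicator I i)" by simp
  qed
qed

end
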